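(* Let $G$ be a bipartite graph with $n\ge 2$ vertices, $m\ge 1$ edges and minimum degree $\delta$. Then $$EE(G) \ge 2\cosh\left(\frac{2(m-\delta)}{n-1}\right) + (n-2),$$ with equality if and only if $n=2p+1$ and $G\cong K_{p,p}\cup K_1$.
   Context: All graphs are finite, simple and undirected. For a graph $G$ with adjacency matrix $A(G)$ having eigenvalues $\lambda_1\ge\cdots\ge\lambda_n$, the Estrada index is $EE(G)=\sum_{i=1}^n e^{\lambda_i}$. $K_{p,p}$ is the complete bipartite graph with both parts of size $p$; $K_{p,p}\cup K_1$ is its disjoint union with one isolated vertex. *)

theory Defs
  imports Complex_Main "Jordan_Normal_Form.Char_Poly"
begin

definition simple_graph :: "nat \<Rightarrow> (nat \<Rightarrow> nat \<Rightarrow> bool) \<Rightarrow> bool" where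
  "simple_graph n E \<longleftrightarrow>
     (\<forall>i j. E i j \<longrightarrow> i < n \<and> j < n \<and> i \<noteq> j) \<and> (\<forall>i j. E i j \<longrightarrow> E j i)"

definition adj_matrix :: "nat \<Rightarrow> (nat \<Rightarrow> nat \<Rightarrow> bool) \<Rightarrow> real mat" where
  "adj_matrix n E = mat n n (\<lambda>(i, j). if E i j then 1 else 0)"

text \<open>The adjacency matrix is real symmetric, so all roots of its
  characteristic polynomial are real.\<close>
definition estrada_index :: "nat \<Rightarrow> (nat \<Rightarrow> nat \<Rightarrow> bool) \<Rightarrow> real" where
  "estrada_index n E =
     (let p = char_poly (adj_matrix n E) in
      \<Sum>x\<in>{x. poly p x = 0}. of_nat (order x p) * exp x)"

definition num_edges :: "nat \<Rightarrow> (nat \<Rightarrow> nat \<Rightarrow> bool) \<Rightarrow> nat" where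
  "num_edges n E = card {(i, j). i < j \<and> j < n \<and> E i j}"

definition degree :: "nat \<Rightarrow> (nat \<Rightarrow> nat \<Rightarrow> bool) \<Rightarrow> nat \<Rightarrow> nat" where
  "degree n E i = card {j. j < n \<and> E i j}"

definition min_degree :: "nat \<Rightarrow> (nat \<Rightarrow> nat \<Rightarrow> bool) \<Rightarrow> nat" where
  "min_degree n E = Min (degree n E ` {0..<n})"

definition bipartite :: "nat \<Rightarrow> (nat \<Rightarrow> nat \<Rightarrow> bool) \<Rightarrow> bool" where
  "bipartite n E \<longleftrightarrow> (\<exists>X. X \<subseteq> {0..<n} \<and>
     (\<forall>i j. E i j \<longrightarrow> (i \<in> X \<longleftrightarrow> j \<notin> X)))"

definition graph_iso :: "nat \<Rightarrow> (nat \<Rightarrow> nat \<Rightarrow> bool) \<Rightarrow> nat \<Rightarrow> (nat \<Rightarrow> nat \<Rightarrow> bool) \<Rightarrow> bool" where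
  "graph_iso n E n' E' \<longleftrightarrow> (\<exists>f. bij_betw f {0..<n} {0..<n'} \<and>
     (\<forall>i<n. \<forall>j<n. E i j \<longleftrightarrow> E' (f i) (f j)))"

text \<open>K_{p,p} \<union> K_1 on vertices {0..<2p+1}: parts {0..<p} and {p..<2p}, vertex 2p isolated.\<close>
definition Kpp_K1 :: "nat \<Rightarrow> nat \<Rightarrow> nat \<Rightarrow> bool" where
  "Kpp_K1 p i j \<longleftrightarrow> (i < p \<and> p \<le> j \<and> j < 2 * p) \<or> (j < p \<and> p \<le> i \<and> i < 2 * p)"

end

theory Submission
  imports Defs "Jordan_Normal_Form.Schur_Decomposition"
begin


lemma real_sym_eig_real:
  fixes A :: "real mat"
  assumes A: "A \<in> carrier_mat n n" and sym: "\<And>i j. i<n \<Longrightarrow> j<n \<Longrightarrow> A$$(i,j) = A$$(j,i)"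
    and ev: "eigenvalue (map_mat complex_of_real A) k"
  shows "Im k = 0"
proof -
  let ?Ac = "map_mat complex_of_real A"
  from ev obtain v where v: "v \<in> carrier_vec n" "v \<noteq> 0\<^sub>v n" "?Ac *\<^sub>v v = k \<cdot>\<^sub>v v"
    unfolding eigenvalue_def eigenvector_def using A by auto
  have row: "(\<Sum>j<n. complex_of_real (A$$(i,j)) * v$j) = k * v$i" if i: "i<n" for i
  proof -
    have "(?Ac *\<^sub>v v) $ i = k * v$i" using v(3) v(1) i by (metis carrier_vecD index_smult_vec(1))
    moreover have "(?Ac *\<^sub>v v) $ i = (\<Sum>j<n. complex_of_real (A$$(i,j)) * v$j)"
      using A v(1) i by (auto simp: scalar_prod_def lessThan_atLeast0 intro!: sum.cong)
    ultimately show ?thesis by simp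
  qed
  define S where "S = (\<Sum>i<n. \<Sum>j<n. cnj (v$i) * complex_of_real (A$$(i,j)) * v$j)"
  have S1: "S = k * (\<Sum>i<n. complex_of_real ((cmod (v$i))^2))"
  proof -
    have "S = (\<Sum>i<n. cnj (v$i) * (\<Sum>j<n. complex_of_real (A$$(i,j)) * v$j))"
      unfolding S_def by (simp add: sum_distrib_left mult.assoc)
    also have "\<dots> = (\<Sum>i<n. k * (cnj (v$i) * v$i))" using row by (simp add: algebra_simps)
    also have "\<dots> = k * (\<Sum>i<n. complex_of_real ((cmod (v$i))^2))"
      by (simp add: sum_distrib_left complex_norm_square mult.commute del: of_real_power)
    finally show ?thesis .
  qed
  have "cnj S = (\<Sum>i<n. \<Sum>j<n. v$i * complex_of_real (A$$(i,j)) * cnj (v$j))"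
    unfolding S_def by (simp add: cnj_sum)
  also have "\<dots> = (\<Sum>j<n. \<Sum>i<n. v$i * complex_of_real (A$$(i,j)) * cnj (v$j))"
    by (rule sum.swap)
  also have "\<dots> = S" unfolding S_def
    by (intro sum.cong refl, simp add: sym mult.commute mult.left_commute)
  finally have "cnj S = S" .
  hence ImS: "Im S = 0" by (metis Reals_cnj_iff complex_is_Real_iff)
  obtain i where i: "i<n" "v$i \<noteq> 0" using v(1,2) by (metis carrier_vecD eq_vecI index_zero_vec(1) index_zero_vec(2))
  have W: "(\<Sum>i<n. (cmod (v$i))^2) > 0"
    by (rule sum_pos2[of _ i], use i in auto)
  have "Im S = Im k * (\<Sum>i<n. (cmod (v$i))^2)" unfolding S1
    by (simp add: of_real_sum[symmetric] del: of_real_sum of_real_power)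
  with ImS W show ?thesis by simp
qed



interpretation rp: map_poly_idom_hom "complex_of_real" ..

lemma map_poly_of_real_prod_lin:
  "map_poly complex_of_real (\<Prod>r\<leftarrow>rs. [:-r,1:]) = (\<Prod>r\<leftarrow>map complex_of_real rs. [:-r,1:])"
  proof (induction rs)
  case (Cons a rs)
  have "map_poly complex_of_real (\<Prod>r\<leftarrow>a#rs. [:-r,1:]) = map_poly complex_of_real [:-a,1:] * map_poly complex_of_real (\<Prod>r\<leftarrow>rs. [:-r,1:])"
    by (simp only: list.map prod_list.Cons rp.hom_mult)
  also have "\<dots> = [:-complex_of_real a,1:] * (\<Prod>r\<leftarrow>map complex_of_real rs. [:-r,1:])"
    using Cons by simp
  finally show ?case by simp
qed simp

lemma map_poly_of_real_inj:
  assumes "map_poly complex_of_real p = map_poly complex_of_real q" shows "p = q"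
proof (rule poly_eqI)
  fix i
  have "coeff (map_poly complex_of_real p) i = coeff (map_poly complex_of_real q) i" using assms by simp
  thus "coeff p i = coeff q i" by (simp add: coeff_map_poly)
qed

lemma real_sym_char_poly_split:
  fixes A :: "real mat"
  assumes A: "A \<in> carrier_mat n n" and symA: "\<And>i j. i<n \<Longrightarrow> j<n \<Longrightarrow> A$$(i,j) = A$$(j,i)"
  shows "\<exists>rs. char_poly A = (\<Prod>r\<leftarrow>rs. [:-r,1:]) \<and> length rs = n"
proof -
  let ?Ac = "map_mat complex_of_real A"
  have Ac: "?Ac \<in> carrier_mat n n" using A by simp
  obtain as where as: "char_poly ?Ac = (\<Prod>a\<leftarrow>as. [:- a, 1:])" "length as = n"
    using char_poly_factorized[OF Ac] by blast
  have re: "Im a = 0" if a: "a \<in> set as" for a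
  proof -
    have "poly (char_poly ?Ac) a = 0" unfolding as(1) using a
      by (simp add: poly_prod_list prod_list_zero_iff)
    hence "eigenvalue ?Ac a" using eigenvalue_root_char_poly[OF Ac] by simp
    thus ?thesis using real_sym_eig_real[OF A symA] by blast
  qed
  define rs where "rs = map Re as"
  have eq: "map complex_of_real rs = as" unfolding rs_def using re
    by (induction as) (auto simp: complex_eq_iff)
  have "map_poly complex_of_real (char_poly A) = map_poly complex_of_real (\<Prod>r\<leftarrow>rs. [:-r,1:])"
    unfolding map_poly_of_real_prod_lin eq of_real_hom.char_poly_hom[OF A, symmetric] as(1) ..
  hence "char_poly A = (\<Prod>r\<leftarrow>rs. [:-r,1:])" by (rule map_poly_of_real_inj)
  moreover have "length rs = n" using as(2) rs_def by simp
  ultimately show ?thesis by blast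
qed



lemma mult_entry:
  fixes X Y :: "'a::comm_semiring_1 mat"
  assumes "X \<in> carrier_mat n n" "Y \<in> carrier_mat n n" "i < n" "j < n"
  shows "(X * Y) $$ (i,j) = (\<Sum>l<n. X$$(i,l) * Y$$(l,j))"
  using assms by (auto simp: scalar_prod_def lessThan_atLeast0 intro!: sum.cong)

definition mtr :: "real mat \<Rightarrow> nat \<Rightarrow> real" where
  "mtr M n = (\<Sum>i<n. M$$(i,i))"

lemma mtr_comm:
  assumes X: "X \<in> carrier_mat n n" and Y: "Y \<in> carrier_mat n n"
  shows "mtr (X * Y) n = mtr (Y * X) n"
proof -
  have "mtr (X * Y) n = (\<Sum>i<n. \<Sum>l<n. X$$(i,l) * Y$$(l,i))"
    unfolding mtr_def by (rule sum.cong[OF refl], rule mult_entry[OF X Y]) auto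
  also have "\<dots> = (\<Sum>l<n. \<Sum>i<n. Y$$(l,i) * X$$(i,l))"
    by (subst sum.swap) (simp add: mult.commute)
  also have "\<dots> = mtr (Y * X) n"
    unfolding mtr_def by (rule sum.cong[OF refl], rule mult_entry[OF Y X, symmetric]) auto
  finally show ?thesis .
qed

lemma upper_tri_pow:
  fixes T :: "real mat"
  assumes T: "T \<in> carrier_mat n n" and ut: "upper_triangular T"
  shows "upper_triangular (T ^\<^sub>m k) \<and> (\<forall>i<n. (T ^\<^sub>m k)$$(i,i) = (T$$(i,i))^k)"
proof (induction k)
  case 0
  then show ?case using T by (auto simp: upper_triangular_def)
next
  case (Suc k)
  let ?S = "T ^\<^sub>m k"
  have S: "?S \<in> carrier_mat n n" using T by simp
  have utS: "\<And>i j. i<n \<Longrightarrow> j<i \<Longrightarrow> ?S$$(i,j) = 0"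
    using Suc.IH S unfolding upper_triangular_def by auto
  have utT: "\<And>i j. i<n \<Longrightarrow> j<i \<Longrightarrow> T$$(i,j) = 0"
    using ut T unfolding upper_triangular_def by auto
  have low: "(?S * T)$$(i,j) = 0" if "i<n" "j<i" for i j
  proof -
    have "(?S * T)$$(i,j) = (\<Sum>l<n. ?S$$(i,l) * T$$(l,j))"
      using that by (intro mult_entry[OF S T]) auto
    also have "\<dots> = 0"
    proof (intro sum.neutral ballI)
      fix l assume "l \<in> {..<n}"
      show "?S$$(i,l) * T$$(l,j) = 0"
      proof (cases "l < i")
        case True thus ?thesis using utS that by simp
      next
        case False thus ?thesis using utT[of l j] that \<open>l \<in> {..<n}\<close> by simp
      qed
    qed
    finally show ?thesis .
  qed
  have diag: "(?S * T)$$(i,i) = (T$$(i,i))^Suc k" if "i<n" for i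
  proof -
    have "(?S * T)$$(i,i) = (\<Sum>l<n. ?S$$(i,l) * T$$(l,i))"
      using that by (intro mult_entry[OF S T]) auto
    also have "\<dots> = ?S$$(i,i) * T$$(i,i)"
    proof -
      have "(\<Sum>l<n. ?S$$(i,l) * T$$(l,i)) = ?S$$(i,i) * T$$(i,i) + (\<Sum>l\<in>{..<n}-{i}. ?S$$(i,l) * T$$(l,i))"
        using that by (intro sum.remove) auto
      also have "(\<Sum>l\<in>{..<n}-{i}. ?S$$(i,l) * T$$(l,i)) = 0"
      proof (intro sum.neutral ballI)
        fix l assume l: "l \<in> {..<n}-{i}"
        show "?S$$(i,l) * T$$(l,i) = 0"
        proof (cases "l < i")
          case True thus ?thesis using utS that by simp
        next
          case False hence "i < l" using l by auto
          thus ?thesis using utT[of l i] l by simp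
        qed
      qed
      finally show ?thesis by simp
    qed
    also have "\<dots> = (T$$(i,i))^Suc k" using Suc.IH that by simp
    finally show ?thesis .
  qed
  show ?case using low diag S T unfolding upper_triangular_def by auto
qed

lemma mtr_pow_eigs:
  fixes A :: "real mat"
  assumes A: "A \<in> carrier_mat n n" and cp: "char_poly A = (\<Prod>r\<leftarrow>rs. [:-r,1:])"
  shows "mtr (A ^\<^sub>m k) n = (\<Sum>r\<leftarrow>rs. r^k)"
proof -
  obtain T P Q where sd: "schur_decomposition A rs = (T,P,Q)" by (cases "schur_decomposition A rs") auto
  from schur_decomposition[OF A cp sd] have sw: "similar_mat_wit A T P Q"
    and ut: "upper_triangular T" and dg: "diag_mat T = rs" by auto
  from sw A have T: "T \<in> carrier_mat n n" and P: "P \<in> carrier_mat n n" and Q: "Q \<in> carrier_mat n n"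
    and QP: "Q * P = 1\<^sub>m n" unfolding similar_mat_wit_def Let_def by auto
  have "A ^\<^sub>m k = P * T ^\<^sub>m k * Q" by (rule similar_mat_wit_pow_id[OF sw])
  hence "mtr (A ^\<^sub>m k) n = mtr (P * T ^\<^sub>m k * Q) n" by simp
  also have "\<dots> = mtr (Q * (P * T ^\<^sub>m k)) n"
    by (rule mtr_comm) (use P Q T in auto)
  also have "Q * (P * T ^\<^sub>m k) = (Q * P) * T ^\<^sub>m k"
    by (rule assoc_mult_mat[symmetric, OF Q P pow_carrier_mat[OF T]])
  also have "\<dots> = T ^\<^sub>m k" using QP T by simp
  also have "mtr (T ^\<^sub>m k) n = (\<Sum>i<n. (T$$(i,i))^k)"
    unfolding mtr_def using upper_tri_pow[OF T ut, of k] by simp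
  also have "\<dots> = (\<Sum>r\<leftarrow>diag_mat T. r^k)"
    using T by (simp add: diag_mat_def sum_list_map_eq_sum_count2 lessThan_atLeast0 sum_list_distinct_conv_sum_set)
  finally show ?thesis using dg by simp
qed



lemma pow_mat_add':
  fixes A :: "real mat"
  assumes A: "A \<in> carrier_mat n n"
  shows "A ^\<^sub>m (k + l) = A ^\<^sub>m k * A ^\<^sub>m l"
proof (induction l)
  case 0 then show ?case using A by simp
next
  case (Suc l)
  have "A ^\<^sub>m (k + Suc l) = A ^\<^sub>m (k + l) * A" by simp
  also have "\<dots> = A ^\<^sub>m k * A ^\<^sub>m l * A" using Suc by simp
  also have "\<dots> = A ^\<^sub>m k * (A ^\<^sub>m l * A)"
    by (rule assoc_mult_mat[OF pow_carrier_mat[OF A] pow_carrier_mat[OF A] A])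
  finally show ?case by simp
qed

lemma pow_entry:
  fixes A :: "real mat"
  assumes A: "A \<in> carrier_mat n n" and ij: "i<n" "j<n"
  shows "(A ^\<^sub>m (k + l))$$(i,j) = (\<Sum>m<n. (A ^\<^sub>m k)$$(i,m) * (A ^\<^sub>m l)$$(m,j))"
  unfolding pow_mat_add'[OF A] by (rule mult_entry[OF pow_carrier_mat[OF A] pow_carrier_mat[OF A] ij])

lemma pow_one': "A \<in> carrier_mat n n \<Longrightarrow> A ^\<^sub>m 1 = (A :: real mat)"
  by simp

lemma pow_sym:
  fixes A :: "real mat"
  assumes A: "A \<in> carrier_mat n n" and sym: "\<And>i j. i<n \<Longrightarrow> j<n \<Longrightarrow> A$$(i,j) = A$$(j,i)"
  shows "i<n \<Longrightarrow> j<n \<Longrightarrow> (A ^\<^sub>m k)$$(i,j) = (A ^\<^sub>m k)$$(j,i)"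
proof (induction k arbitrary: i j)
  case 0 then show ?case using A by simp
next
  case (Suc k)
  have "(A ^\<^sub>m (k + 1))$$(i,j) = (\<Sum>m<n. (A ^\<^sub>m k)$$(i,m) * (A ^\<^sub>m 1)$$(m,j))"
    by (rule pow_entry[OF A Suc.prems])
  also have "\<dots> = (\<Sum>m<n. (A ^\<^sub>m 1)$$(j,m) * (A ^\<^sub>m k)$$(m,i))"
    using Suc.IH Suc.prems A sym by (intro sum.cong refl) (auto simp: mult.commute)
  also have "\<dots> = (A ^\<^sub>m (1 + k))$$(j,i)"
    by (rule pow_entry[OF A Suc.prems(2,1), symmetric])
  finally show ?case by simp
qed



definition qf :: "real mat \<Rightarrow> nat \<Rightarrow> (nat \<Rightarrow> real) \<Rightarrow> nat \<Rightarrow> real" where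
  "qf A n x k = (\<Sum>i<n. \<Sum>j<n. x i * (A ^\<^sub>m k)$$(i,j) * x j)"

definition yv :: "real mat \<Rightarrow> nat \<Rightarrow> (nat \<Rightarrow> real) \<Rightarrow> nat \<Rightarrow> nat \<Rightarrow> real" where
  "yv A n x k i = (\<Sum>j<n. (A ^\<^sub>m k)$$(i,j) * x j)"

lemma CS_sum:
  fixes a b :: "nat \<Rightarrow> real"
  shows "(\<Sum>i\<in>I. a i * b i)^2 \<le> (\<Sum>i\<in>I. (a i)^2) * (\<Sum>i\<in>I. (b i)^2)"
proof -
  have "0 \<le> (\<Sum>i\<in>I. \<Sum>j\<in>I. (a i * b j - a j * b i)^2)"
    by (intro sum_nonneg) auto
  also have "\<dots> = (\<Sum>i\<in>I. \<Sum>j\<in>I. (a i)^2 * (b j)^2 + (a j)^2 * (b i)^2 - 2 * ((a i * b i) * (a j * b j)))"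
    by (intro sum.cong refl) (simp add: power2_eq_square algebra_simps)
  also have "\<dots> = (\<Sum>i\<in>I. \<Sum>j\<in>I. (a i)^2 * (b j)^2) + (\<Sum>i\<in>I. \<Sum>j\<in>I. (a j)^2 * (b i)^2) - 2 * (\<Sum>i\<in>I. \<Sum>j\<in>I. (a i * b i) * (a j * b j))"
    by (simp add: sum_subtractf sum.distrib sum_distrib_left)
  also have "(\<Sum>i\<in>I. \<Sum>j\<in>I. (a j)^2 * (b i)^2) = (\<Sum>i\<in>I. \<Sum>j\<in>I. (a i)^2 * (b j)^2)"
    by (rule sum.swap)
  also have "(\<Sum>i\<in>I. \<Sum>j\<in>I. (a i)^2 * (b j)^2) = (\<Sum>i\<in>I. (a i)^2) * (\<Sum>i\<in>I. (b i)^2)"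
    by (simp add: sum_product)
  also have "(\<Sum>i\<in>I. \<Sum>j\<in>I. (a i * b i) * (a j * b j)) = (\<Sum>i\<in>I. a i * b i)^2"
    by (simp add: sum_product power2_eq_square)
  finally show ?thesis by simp
qed

context
  fixes A :: "real mat" and n :: nat
  assumes A: "A \<in> carrier_mat n n" and sym: "\<And>i j. i<n \<Longrightarrow> j<n \<Longrightarrow> A$$(i,j) = A$$(j,i)"
begin

lemma qf_yv: "qf A n x k = (\<Sum>i<n. x i * yv A n x k i)"
  unfolding qf_def yv_def by (simp add: sum_distrib_left mult.assoc)

lemma qf_double: "qf A n x (k + k) = (\<Sum>l<n. (yv A n x k l)^2)"
proof -
  let ?B = "A ^\<^sub>m k"
  have "qf A n x (k + k) = (\<Sum>i<n. \<Sum>j<n. x i * (\<Sum>l<n. ?B$$(i,l) * ?B$$(l,j)) * x j)"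
    unfolding qf_def by (intro sum.cong refl, subst pow_entry[OF A]) auto
  also have "\<dots> = (\<Sum>i<n. \<Sum>j<n. \<Sum>l<n. (?B$$(l,i) * x i) * (?B$$(l,j) * x j))"
  proof (intro sum.cong refl)
    fix i j assume i: "i \<in> {..<n}" and j: "j \<in> {..<n}"
    have "x i * (\<Sum>l<n. ?B$$(i,l) * ?B$$(l,j)) * x j = (\<Sum>l<n. x i * (?B$$(i,l) * ?B$$(l,j)) * x j)"
      by (simp add: sum_distrib_left sum_distrib_right)
    also have "\<dots> = (\<Sum>l<n. (?B$$(l,i) * x i) * (?B$$(l,j) * x j))"
      using i by (intro sum.cong refl) (simp add: pow_sym[OF A sym, of i])
    finally show "x i * (\<Sum>l<n. ?B$$(i,l) * ?B$$(l,j)) * x j = (\<Sum>l<n. (?B$$(l,i) * x i) * (?B$$(l,j) * x j))" .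
  qed
  also have "\<dots> = (\<Sum>i<n. \<Sum>l<n. \<Sum>j<n. (?B$$(l,i) * x i) * (?B$$(l,j) * x j))"
    by (rule sum.cong[OF refl], rule sum.swap)
  also have "\<dots> = (\<Sum>l<n. \<Sum>i<n. \<Sum>j<n. (?B$$(l,i) * x i) * (?B$$(l,j) * x j))"
    by (rule sum.swap)
  also have "\<dots> = (\<Sum>l<n. (yv A n x k l)^2)"
    unfolding yv_def power2_eq_square by (simp add: sum_product)
  finally show ?thesis .
qed

lemma qf_CS: "(qf A n x k)^2 \<le> (\<Sum>i<n. (x i)^2) * qf A n x (k + k)"
proof -
  have "qf A n x (k + k) = (\<Sum>l<n. (yv A n x k l)^2)" by (rule qf_double)
  moreover have "qf A n x k = (\<Sum>i<n. x i * yv A n x k i)" by (rule qf_yv)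
  ultimately show ?thesis using CS_sum[of x "yv A n x k" "{..<n}"] by simp
qed

lemma qf_tr: "qf A n x (k + k) \<le> (\<Sum>i<n. (x i)^2) * mtr (A ^\<^sub>m (k + k)) n"
proof -
  let ?B = "A ^\<^sub>m k"
  have "qf A n x (k + k) = (\<Sum>l<n. (yv A n x k l)^2)" by (rule qf_double)
  also have "\<dots> \<le> (\<Sum>l<n. (\<Sum>j<n. (?B$$(l,j))^2) * (\<Sum>j<n. (x j)^2))"
    unfolding yv_def by (intro sum_mono CS_sum)
  also have "\<dots> = (\<Sum>i<n. (x i)^2) * (\<Sum>l<n. \<Sum>j<n. ?B$$(l,j) * ?B$$(j,l))"
    by (simp add: sum_distrib_left sum_distrib_right power2_eq_square pow_sym[OF A sym] mult.commute)
  also have "(\<Sum>l<n. \<Sum>j<n. ?B$$(l,j) * ?B$$(j,l)) = mtr (A ^\<^sub>m (k + k)) n"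
    unfolding mtr_def by (intro sum.cong refl, subst pow_entry[OF A]) auto
  finally show ?thesis .
qed

end


lemma pow_limit_le:
  fixes a b :: real and n :: nat
  assumes a: "a \<ge> 0" and b: "b \<ge> 0" and H: "\<And>j. a^(2^(j+1)) \<le> n * b^(2^(j+1))"
  shows "a \<le> b"
proof (rule ccontr)
  assume "\<not> a \<le> b"
  hence ab: "b < a" by simp
  show False
  proof (cases "b = 0")
    case True
    have "a^2 \<le> 0" using H[of 0] True by simp
    have "a = 0"
    proof (rule ccontr)
      assume "a \<noteq> 0" hence "a > 0" using a by simp
      hence "a^2 > 0" by simp
      thus False using \<open>a^2 \<le> 0\<close> by simp
    qed
    thus False using ab True by simp
  next
    case False
    hence bpos: "b > 0" using b by simp
    define r where "r = a / b"
    have r1: "r > 1" unfolding r_def using ab bpos by simp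
    define j where "j = nat \<lceil>real n / (r - 1)\<rceil>"
    define N :: nat where "N = 2^(j+1)"
    have "real n / (r - 1) \<le> real j" unfolding j_def by linarith
    hence jn: "real n \<le> real j * (r - 1)" using r1 by (simp add: divide_le_eq)
    have Nj: "real j + 1 \<le> real N" unfolding N_def
    proof -
      have "j + 1 < 2^(j+1)" by (rule less_exp)
      thus "real j + 1 \<le> real (2^(j+1))" by linarith
    qed
    have "1 + real N * (r - 1) \<le> (1 + (r - 1))^N"
      by (rule Bernoulli_inequality) (use r1 in simp)
    hence "1 + real N * (r - 1) \<le> r^N" by simp
    moreover have "real N * (r - 1) \<ge> (real j + 1) * (r - 1)"
      using Nj r1 by (intro mult_right_mono) auto
    ultimately have rN: "r^N > n" using jn r1 by (simp add: algebra_simps)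
    have "a = r * b" unfolding r_def using bpos by simp
    hence "a^N = r^N * b^N" by (simp add: power_mult_distrib)
    moreover have "a^N \<le> n * b^N" using H[of j] unfolding N_def by simp
    ultimately have "r^N * b^N \<le> n * b^N" by simp
    hence "r^N \<le> n" using bpos by simp
    thus False using rN by simp
  qed
qed

context
  fixes A :: "real mat" and n :: nat
  assumes A: "A \<in> carrier_mat n n" and sym: "\<And>i j. i<n \<Longrightarrow> j<n \<Longrightarrow> A$$(i,j) = A$$(j,i)"
begin

lemma qf_iter:
  "(qf A n x c)^(2^(j+1)) \<le> (\<Sum>i<n. (x i)^2)^(2^(j+1) - 1) * qf A n x (c * 2^(j+1))"
proof (induction j)
  case 0
  show ?case using qf_CS[OF A sym, of x c] by (simp add: mult_2_right)
next
  case (Suc j)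
  define N :: nat where "N = 2^(j+1)"
  define w where "w = (\<Sum>i<n. (x i)^2)"
  have w: "w \<ge> 0" unfolding w_def by (simp add: sum_nonneg)
  have N1: "N \<ge> 1" unfolding N_def by simp
  have ev: "even N" unfolding N_def by simp
  have IH: "(qf A n x c)^N \<le> w^(N - 1) * qf A n x (c * N)" using Suc unfolding N_def w_def .
  have "(qf A n x c)^(2^(Suc j + 1)) = ((qf A n x c)^N)^2"
    unfolding N_def by (simp add: power_mult[symmetric] mult.commute)
  also have "\<dots> \<le> (w^(N - 1) * qf A n x (c * N))^2"
    by (rule power_mono[OF IH]) (use ev in \<open>simp add: zero_le_even_power\<close>)
  also have "\<dots> = w^(2*(N-1)) * (qf A n x (c * N))^2"
    by (simp add: power_mult_distrib power_mult[symmetric] mult.commute)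
  also have "\<dots> \<le> w^(2*(N-1)) * (w * qf A n x (c * N + c * N))"
  proof -
    have "(qf A n x (c * N))^2 \<le> w * qf A n x (c * N + c * N)" using qf_CS[OF A sym] unfolding w_def .
    thus ?thesis by (rule mult_left_mono) (use w in simp)
  qed
  also have "\<dots> = w^(2^(Suc j + 1) - 1) * qf A n x (c * 2^(Suc j + 1))"
  proof -
    have p: "(1::nat) \<le> 2^j" by simp
    have e1: "(2::nat)^(Suc j + 1) = 4 * 2^j" "N = 2 * 2^j" unfolding N_def by simp_all
    have "2*(N-1) + 1 = 2^(Suc j + 1) - 1" unfolding e1 using p by arith
    moreover have "c * N + c * N = c * 2^(Suc j + 1)" unfolding N_def by simp
    ultimately have E: "2*(N-1) + 1 = 2^(Suc j + 1) - 1" "c * N + c * N = c * 2^(Suc j + 1)" .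
    have "w^(2*(N-1)) * (w * qf A n x (c * N + c * N)) = w^(2*(N-1) + 1) * qf A n x (c * N + c * N)"
      by (simp only: power_add power_one_right mult.assoc)
    thus ?thesis unfolding E .
  qed
  finally show ?case unfolding w_def .
qed

lemma rayleigh_gen:
  assumes cp: "char_poly A = (\<Prod>r\<leftarrow>rs. [:-r,1:])" and len: "length rs = n"
    and rho: "\<rho> \<ge> 0" "\<And>r. r \<in> set rs \<Longrightarrow> \<bar>r\<bar> \<le> \<rho>"
    and c: "c > 0"
  shows "\<bar>qf A n x c\<bar> \<le> (\<Sum>i<n. (x i)^2) * \<rho>^c"
proof -
  define w where "w = (\<Sum>i<n. (x i)^2)"
  have w: "w \<ge> 0" unfolding w_def by (simp add: sum_nonneg)
  show ?thesis unfolding w_def[symmetric]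
  proof (rule pow_limit_le[where n = n])
    fix j :: nat
    define N :: nat where "N = 2^(j+1)"
    define K where "K = c * 2^j"
    have KK: "c * N = K + K" unfolding N_def K_def by simp
    have ev: "even N" unfolding N_def by simp
    have N1: "N \<ge> 1" unfolding N_def by simp
    have "\<bar>qf A n x c\<bar>^N = (qf A n x c)^N" using ev by (simp add: power_even_abs)
    also have "\<dots> \<le> w^(N - 1) * qf A n x (c * N)" using qf_iter[of x c j] unfolding N_def w_def .
    also have "\<dots> \<le> w^(N-1) * (w * mtr (A ^\<^sub>m (K + K)) n)"
    proof -
      have "qf A n x (K + K) \<le> w * mtr (A ^\<^sub>m (K + K)) n" using qf_tr[OF A sym] unfolding w_def .
      thus ?thesis unfolding KK by (rule mult_left_mono) (use w in simp)
    qed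
    also have "mtr (A ^\<^sub>m (K + K)) n = (\<Sum>r\<leftarrow>rs. r^(K+K))" by (rule mtr_pow_eigs[OF A cp])
    also have "\<dots> \<le> (\<Sum>r\<leftarrow>rs. \<rho>^(K+K))"
    proof (rule sum_list_mono)
      fix r assume "r \<in> set rs"
      hence "\<bar>r\<bar>^(K+K) \<le> \<rho>^(K+K)" using rho by (intro power_mono) auto
      thus "r^(K+K) \<le> \<rho>^(K+K)" by (simp add: power_even_abs)
    qed
    also have "\<dots> = n * \<rho>^(K+K)" using len by (simp add: sum_list_triv)
    finally have "\<bar>qf A n x c\<bar>^N \<le> w^(N-1) * (w * (n * \<rho>^(K+K)))"
      using w by (simp add: mult_left_mono)
    also have "\<dots> = n * (w * \<rho>^c)^N"
    proof -
      have "w^(N-1) * w = w^N" using N1 by (cases N) auto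
      moreover have "\<rho>^(K+K) = (\<rho>^c)^N" unfolding KK[symmetric] by (simp add: power_mult)
      ultimately show ?thesis by (simp add: power_mult_distrib algebra_simps)
    qed
    finally show "\<bar>qf A n x c\<bar>^(2^(j+1)) \<le> n * (w * \<rho>^c)^(2^(j+1))" unfolding N_def .
  qed (use w rho in auto)
qed

end


lemma order_prod_lin: "Polynomial.order x (\<Prod>r\<leftarrow>rs. [:-r,1:]) = count_list rs x"
proof (induction rs)
  case Nil
  then show ?case by (simp add: order_0I)
next
  case (Cons a rs)
  have nz0: "(\<Prod>r\<leftarrow>a#rs. [:-r,1:]) \<noteq> 0"
    by (subst prod_list_zero_iff) auto
  have pe: "(\<Prod>r\<leftarrow>a#rs. [:-r,1:]) = [:-a,1:] * (\<Prod>r\<leftarrow>rs. [:-r,1:])"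
    by (simp only: list.map prod_list.Cons)
  have nz: "[:-a,1:] * (\<Prod>r\<leftarrow>rs. [:-r,1:]) \<noteq> 0" using nz0 pe by simp
  have "Polynomial.order x (\<Prod>r\<leftarrow>a#rs. [:-r,1:]) = Polynomial.order x [:-a,1:] + Polynomial.order x (\<Prod>r\<leftarrow>rs. [:-r,1:])"
    unfolding pe by (rule order_mult[OF nz])
  moreover have "Polynomial.order x [:-a,1:] = (if x = a then 1 else 0)"
  proof (cases "x = a")
    case True thus ?thesis using order_power_n_n[of a 1] by simp
  next
    case False
    have "poly [:-a,1:] x \<noteq> 0" using False by simp
    thus ?thesis using False order_root[of "[:-a,1:]" x] by auto
  qed
  ultimately show ?case using Cons by auto
qed

lemma sum_list_count_real:
  fixes f :: "'a \<Rightarrow> real"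
  assumes "finite S" "set xs \<subseteq> S"
  shows "(\<Sum>r\<leftarrow>xs. f r) = (\<Sum>x\<in>S. real (count_list xs x) * f x)"
  using assms(2)
proof (induction xs)
  case Nil then show ?case by simp
next
  case (Cons a xs)
  have aS: "a \<in> S" using Cons.prems by simp
  have "(\<Sum>x\<in>S. real (count_list (a#xs) x) * f x) = (\<Sum>x\<in>S. real (count_list xs x) * f x + (if a = x then f x else 0))"
    by (intro sum.cong refl) (auto simp: algebra_simps)
  also have "\<dots> = (\<Sum>x\<in>S. real (count_list xs x) * f x) + f a"
    using assms(1) aS by (simp add: sum.distrib)
  finally show ?case using Cons by simp
qed

lemma estrada_list:
  assumes cp: "char_poly (adj_matrix n E) = (\<Prod>r\<leftarrow>rs. [:-r,1:])"
  shows "estrada_index n E = (\<Sum>r\<leftarrow>rs. exp r)"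
proof -
  have roots: "{x. poly (\<Prod>r\<leftarrow>rs. [:-r,1:]) x = 0} = set rs"
    by (auto simp: poly_prod_list prod_list_zero_iff)
  show ?thesis unfolding estrada_index_def Let_def cp roots order_prod_lin
    by (rule sum_list_count_real[symmetric]) auto
qed

lemma sum_list_mset_eq:
  fixes xs ys :: "real list"
  assumes "mset xs = mset ys" shows "(\<Sum>r\<leftarrow>xs. f r) = (\<Sum>r\<leftarrow>ys. (f r :: real))"
  by (metis assms mset_map sum_mset_sum_list)

lemma sym_sum_cosh:
  fixes rs ys :: "real list"
  assumes "mset (map uminus rs) = mset rs"
  shows "(\<Sum>r\<leftarrow>rs. exp r) = (\<Sum>r\<leftarrow>rs. cosh r)"
proof -
  have "(\<Sum>r\<leftarrow>rs. exp r) = (\<Sum>r\<leftarrow>map uminus rs. exp r)"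
    using sum_list_mset_eq[OF assms, of exp] by simp
  also have "\<dots> = (\<Sum>r\<leftarrow>rs. exp (-r))" by (simp add: o_def)
  finally have e: "(\<Sum>r\<leftarrow>rs. exp r) = (\<Sum>r\<leftarrow>rs. exp (-r))" .
  have "(\<Sum>r\<leftarrow>rs. cosh r) = (\<Sum>r\<leftarrow>rs. (exp r + exp (-r)) / 2)"
    by (simp add: cosh_def)
  also have "\<dots> = ((\<Sum>r\<leftarrow>rs. exp r) + (\<Sum>r\<leftarrow>rs. exp (-r))) / 2"
    by (induction rs) (simp_all add: field_simps)
  finally show ?thesis using e by simp
qed

lemma split_pair:
  fixes rs ys :: "real list"
  assumes sym: "mset (map uminus rs) = mset rs" and l: "l \<in> set rs" and l0: "l \<noteq> 0"
  shows "\<exists>ys. mset rs = add_mset l (add_mset (-l) (mset ys))"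
proof -
  have "-l \<in> set (map uminus rs)" using l by simp
  hence ml: "-l \<in> set rs" using sym by (metis set_mset_mset)
  have "-l \<noteq> l" using l0 by simp
  hence "-l \<in># mset rs - {#l#}" using ml by (simp add: in_diff_count)
  hence "mset rs - {#l#} = add_mset (-l) (mset rs - {#l#} - {#-l#})" by (rule insert_DiffM[symmetric])
  moreover have "mset rs = add_mset l (mset rs - {#l#})" using l by simp
  ultimately have "mset rs = add_mset l (add_mset (-l) (mset rs - {#l#} - {#-l#}))" by simp
  moreover obtain ys where "mset ys = mset rs - {#l#} - {#-l#}" using ex_mset by blast
  ultimately show ?thesis by metis
qed

lemma split_sum:
  fixes rs ys :: "real list"
  assumes "mset rs = add_mset l (add_mset (-l) (mset ys))"
  shows "(\<Sum>r\<leftarrow>rs. f r) = f l + f (-l) + (\<Sum>r\<leftarrow>ys. (f r :: real))" "length rs = length ys + 2"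
proof -
  have "mset rs = mset (l # (-l) # ys)" using assms by simp
  from sum_list_mset_eq[OF this, of f] show "(\<Sum>r\<leftarrow>rs. f r) = f l + f (-l) + (\<Sum>r\<leftarrow>ys. (f r :: real))" by simp
  from \<open>mset rs = mset (l # (-l) # ys)\<close> show "length rs = length ys + 2"
    by (metis length_Cons mset_eq_length add_2_eq_Suc')
qed



lemma char_poly_neg:
  fixes A :: "real mat"
  assumes A: "A \<in> carrier_mat n n" and cp: "char_poly A = (\<Prod>r\<leftarrow>rs. [:-r,1:])"
  shows "char_poly (-A) = (\<Prod>r\<leftarrow>map uminus rs. [:-r,1:])"
proof -
  obtain T P Q where sd: "schur_decomposition A rs = (T,P,Q)" by (cases "schur_decomposition A rs") auto
  from schur_decomposition[OF A cp sd] have sw: "similar_mat_wit A T P Q"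
    and ut: "upper_triangular T" and dg: "diag_mat T = rs" by auto
  from sw A have T: "T \<in> carrier_mat n n" and P: "P \<in> carrier_mat n n" and Q: "Q \<in> carrier_mat n n"
    and PQ: "P * Q = 1\<^sub>m n" and QP: "Q * P = 1\<^sub>m n" and AT: "A = P * T * Q"
    unfolding similar_mat_wit_def Let_def by auto
  have "P * (-T) = - (P * T)" by (rule uminus_mult_right_mat) (use P T in auto)
  moreover have "- (P * T) * Q = - (P * T * Q)" by (rule uminus_mult_left_mat) (use P T Q in auto)
  ultimately have "-A = P * (-T) * Q" using AT by simp
  hence sw': "similar_mat_wit (-A) (-T) P Q"
    unfolding similar_mat_wit_def Let_def using T P Q PQ QP A by auto
  have "char_poly (-A) = char_poly (-T)"
    by (rule char_poly_similar) (use sw' in \<open>auto simp: similar_mat_def\<close>)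
  also have "\<dots> = (\<Prod>a\<leftarrow>diag_mat (-T). [:- a, 1:])"
    by (rule char_poly_upper_triangular[of _ n]) (use T ut in \<open>auto simp: upper_triangular_def\<close>)
  also have "diag_mat (-T) = map uminus rs" using dg T by (auto simp: diag_mat_def)
  finally show ?thesis .
qed

lemma adj_carrier: "adj_matrix n E \<in> carrier_mat n n"
  unfolding adj_matrix_def by simp

lemma adj_entry: "i < n \<Longrightarrow> j < n \<Longrightarrow> adj_matrix n E $$ (i,j) = (if E i j then 1 else 0)"
  unfolding adj_matrix_def by simp

lemma adj_sym: "simple_graph n E \<Longrightarrow> i < n \<Longrightarrow> j < n \<Longrightarrow> adj_matrix n E $$ (i,j) = adj_matrix n E $$ (j,i)"
  unfolding adj_matrix_def simple_graph_def by auto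

lemma diag_left: 
  fixes M :: "real mat"
  assumes M: "M \<in> carrier_mat n n" and i: "i<n" and j: "j<n"
  shows "(mat n n (\<lambda>(i,j). if i = j then s i else 0) * M) $$ (i,j) = s i * M$$(i,j)"
proof -
  have "(mat n n (\<lambda>(i,j). if i = j then s i else 0) * M) $$ (i,j) = (\<Sum>l<n. (if i = l then s i else 0) * M$$(l,j))"
    by (subst mult_entry[OF _ M i j]) (auto intro!: sum.cong simp: i)
  also have "\<dots> = (\<Sum>l<n. if l = i then s i * M$$(i,j) else 0)" by (intro sum.cong refl) auto
  also have "\<dots> = s i * M$$(i,j)" using i by simp
  finally show ?thesis .
qed

lemma diag_right: 
  fixes M :: "real mat"
  assumes M: "M \<in> carrier_mat n n" and i: "i<n" and j: "j<n"
  shows "(M * mat n n (\<lambda>(i,j). if i = j then s i else 0)) $$ (i,j) = M$$(i,j) * s j"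
proof -
  have "(M * mat n n (\<lambda>(i,j). if i = j then s i else 0)) $$ (i,j) = (\<Sum>l<n. M$$(i,l) * (if l = j then s j else 0))"
    by (subst mult_entry[OF M _ i j]) (auto intro!: sum.cong simp: j)
  also have "\<dots> = (\<Sum>l<n. if l = j then M$$(i,j) * s j else 0)" by (intro sum.cong refl) auto
  also have "\<dots> = M$$(i,j) * s j" using j by simp
  finally show ?thesis .
qed

lemma bip_char_poly_neg:
  assumes sg: "simple_graph n E" and bp: "bipartite n E"
  shows "char_poly (- adj_matrix n E) = char_poly (adj_matrix n E)"
proof -
  let ?A = "adj_matrix n E"
  from bp obtain X where X: "\<And>i j. E i j \<Longrightarrow> (i \<in> X \<longleftrightarrow> j \<notin> X)" unfolding bipartite_def by blast
  define s :: "nat \<Rightarrow> real" where "s i = (if i \<in> X then 1 else -1)" for i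
  define S :: "real mat" where "S = mat n n (\<lambda>(i,j). if i = j then s i else 0)"
  have S: "S \<in> carrier_mat n n" unfolding S_def by simp
  have ss: "s i * s i = 1" for i unfolding s_def by simp
  have SS: "S * S = 1\<^sub>m n"
  proof (rule eq_matI)
    fix i j assume i: "i < dim_row (1\<^sub>m n)" and j: "j < dim_col (1\<^sub>m n)"
    hence "i < n" "j < n" by auto
    thus "(S * S) $$ (i,j) = 1\<^sub>m n $$ (i,j)"
      unfolding S_def using diag_left[OF S[unfolded S_def] \<open>i<n\<close> \<open>j<n\<close>, of s] ss by auto
  qed (use S in auto)
  have neg: "- ?A = S * ?A * S"
  proof (rule eq_matI)
    fix i j assume "i < dim_row (S * ?A * S)" "j < dim_col (S * ?A * S)"
    hence i: "i < n" and j: "j < n" using S adj_carrier[of n E] by auto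
    have SA: "S * ?A \<in> carrier_mat n n" using S adj_carrier[of n E] by simp
    have "(S * ?A * S) $$ (i,j) = (S * ?A) $$ (i,j) * s j"
      unfolding S_def by (rule diag_right[OF SA[unfolded S_def] i j])
    also have "(S * ?A) $$ (i,j) = s i * ?A $$ (i,j)"
      unfolding S_def by (rule diag_left[OF adj_carrier i j])
    finally have "(S * ?A * S) $$ (i,j) = s i * ?A $$ (i,j) * s j" .
    also have "\<dots> = - ?A $$ (i,j)"
      using X[of i j] i j unfolding adj_entry[OF i j] s_def by auto
    finally show "(- ?A) $$ (i,j) = (S * ?A * S) $$ (i,j)" using i j adj_carrier[of n E] by simp
  qed (use S adj_carrier[of n E] in auto)
  have "similar_mat_wit (- ?A) ?A S S"
    unfolding similar_mat_wit_def Let_def using S SS neg adj_carrier[of n E] by auto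
  thus ?thesis by (intro char_poly_similar) (auto simp: similar_mat_def)
qed

lemma bip_sym_spec:
  assumes sg: "simple_graph n E" and bp: "bipartite n E"
    and cp: "char_poly (adj_matrix n E) = (\<Prod>r\<leftarrow>rs. [:-r,1:])"
  shows "mset (map uminus rs) = mset rs"
proof -
  have "(\<Prod>r\<leftarrow>map uminus rs. [:-r,1:]) = (\<Prod>r\<leftarrow>rs. [:-r,1:])"
    using char_poly_neg[OF adj_carrier cp] bip_char_poly_neg[OF sg bp] cp by simp
  hence "count_list (map uminus rs) x = count_list rs x" for x
    by (metis order_prod_lin)
  thus ?thesis by (intro multiset_eqI) (simp only: count_mset)
qed



lemma card_filter_sum:
  fixes S :: "nat set"
  assumes "finite S"
  shows "card {j\<in>S. P j} = (\<Sum>j\<in>S. if P j then 1 else (0::nat))"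
  using assms by (simp add: sum.inter_filter[symmetric])

lemma degree_sum_nat: "degree n E i = (\<Sum>j<n. if E i j then 1 else (0::nat))"
proof -
  have "{j. j < n \<and> E i j} = {j\<in>{..<n}. E i j}" by auto
  thus ?thesis unfolding degree_def using card_filter_sum[of "{..<n}" "E i"] by simp
qed

lemma degree_sum_real: "i < n \<Longrightarrow> real (degree n E i) = (\<Sum>j<n. adj_matrix n E $$ (i,j))"
  unfolding degree_sum_nat of_nat_sum by (intro sum.cong refl) (simp add: adj_entry)

lemma handshake:
  assumes sg: "simple_graph n E"
  shows "(\<Sum>i<n. degree n E i) = 2 * num_edges n E"
proof -
  let ?S = "{(i,j). i<n \<and> j<n \<and> E i j}"
  let ?L = "{(i,j). i<j \<and> j<n \<and> E i j}"
  let ?U = "{(i,j). j<i \<and> i<n \<and> E i j}"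
  have fin: "finite ?S" by (rule finite_subset[of _ "{..<n} \<times> {..<n}"]) auto
  have "?S = Sigma {..<n} (\<lambda>i. {j. j<n \<and> E i j})" by auto
  hence "card ?S = (\<Sum>i<n. degree n E i)" unfolding degree_def by (simp add: card_SigmaI)
  moreover have "?S = ?L \<union> ?U" using sg unfolding simple_graph_def by (auto simp: neq_iff)
  moreover have "?L \<inter> ?U = {}" by auto
  moreover have "finite ?L" "finite ?U" by (rule finite_subset[OF _ fin], auto)+
  moreover have "card ?U = card ?L"
  proof -
    have "?U = (\<lambda>(i,j). (j,i)) ` ?L" using sg unfolding simple_graph_def by auto
    moreover have "inj_on (\<lambda>(i,j). (j,i)) ?L" by (auto simp: inj_on_def)
    ultimately show ?thesis by (simp add: card_image)
  qed
  ultimately show ?thesis unfolding num_edges_def by (simp add: card_Un_disjoint)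
qed

lemma pow1: "(A :: real mat) \<in> carrier_mat n n \<Longrightarrow> A ^\<^sub>m 1 = A"
  by simp

lemma tr_sq:
  assumes sg: "simple_graph n E"
  shows "mtr (adj_matrix n E ^\<^sub>m 2) n = 2 * real (num_edges n E)"
proof -
  let ?A = "adj_matrix n E"
  have "mtr (?A ^\<^sub>m (1+1)) n = (\<Sum>i<n. \<Sum>l<n. ?A$$(i,l) * ?A$$(l,i))"
    unfolding mtr_def by (intro sum.cong refl, subst pow_entry[OF adj_carrier]) (auto simp: pow1[OF adj_carrier])
  also have "\<dots> = (\<Sum>i<n. \<Sum>l<n. ?A$$(i,l))"
    using sg by (intro sum.cong refl) (auto simp: adj_entry simple_graph_def)
  also have "\<dots> = (\<Sum>i<n. real (degree n E i))" by (simp add: degree_sum_real)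
  also have "\<dots> = real (\<Sum>i<n. degree n E i)" by simp
  also have "\<dots> = 2 * real (num_edges n E)" using handshake[OF sg] by simp
  finally show ?thesis by (simp add: numeral_2_eq_2)
qed

lemma min_degree_ex:
  assumes "n \<ge> 1"
  shows "\<exists>v<n. degree n E v = min_degree n E" "\<And>i. i < n \<Longrightarrow> min_degree n E \<le> degree n E i"
proof -
  have ne: "degree n E ` {0..<n} \<noteq> {}" using assms by auto
  have "min_degree n E \<in> degree n E ` {0..<n}" unfolding min_degree_def by (rule Min_in[OF _ ne]) auto
  thus "\<exists>v<n. degree n E v = min_degree n E" by auto
  show "\<And>i. i < n \<Longrightarrow> min_degree n E \<le> degree n E i" unfolding min_degree_def by (rule Min_le) auto
qed



definition ind :: "nat \<Rightarrow> nat \<Rightarrow> real" where "ind v i = (if i = v then 0 else 1)"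

lemma sum_minus_one:
  fixes f :: "nat \<Rightarrow> real"
  assumes "v < n"
  shows "(\<Sum>j<n. f j * ind v j) = (\<Sum>j<n. f j) - f v"
proof -
  have "(\<Sum>j<n. f j * ind v j) = (\<Sum>j<n. f j - (if j = v then f j else 0))"
    by (intro sum.cong refl) (simp add: ind_def)
  also have "\<dots> = (\<Sum>j<n. f j) - f v" using assms by (simp add: sum_subtractf)
  finally show ?thesis .
qed

lemma yv_ind:
  assumes "v < n" "i < n"
  shows "yv (adj_matrix n E) n (ind v) 1 i = real (degree n E i) - adj_matrix n E $$ (i,v)"
  unfolding yv_def pow1[OF adj_carrier] using sum_minus_one[OF assms(1)] degree_sum_real[OF assms(2)] by simp

lemma w_ind: "v < n \<Longrightarrow> (\<Sum>i<n. (ind v i)^2) = real n - 1"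
proof -
  assume v: "v < n"
  have "(\<Sum>i<n. (ind v i)^2) = (\<Sum>i<n. 1 * ind v i)" by (intro sum.cong refl) (simp add: ind_def)
  also have "\<dots> = real n - 1" using sum_minus_one[OF v, of "\<lambda>_. 1"] by simp
  finally show ?thesis .
qed

lemma qf_ind:
  assumes sg: "simple_graph n E" and v: "v < n"
  shows "qf (adj_matrix n E) n (ind v) 1 = 2 * real (num_edges n E) - 2 * real (degree n E v)"
proof -
  let ?A = "adj_matrix n E"
  have "qf ?A n (ind v) 1 = (\<Sum>i<n. ind v i * yv ?A n (ind v) 1 i)"
    by (rule qf_yv[OF adj_carrier adj_sym[OF sg]])
  also have "\<dots> = (\<Sum>i<n. (real (degree n E i) - ?A $$ (i,v)) * ind v i)"
  proof (intro sum.cong refl)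
    fix i assume "i \<in> {..<n}"
    thus "ind v i * yv ?A n (ind v) 1 i = (real (degree n E i) - ?A $$ (i,v)) * ind v i"
      using yv_ind[OF v, of i E] by (simp add: mult.commute)
  qed
  also have "\<dots> = (\<Sum>i<n. (real (degree n E i) - ?A $$ (i,v))) - (real (degree n E v) - ?A $$ (v,v))"
    by (rule sum_minus_one[OF v])
  also have "(\<Sum>i<n. (real (degree n E i) - ?A $$ (i,v))) = real (\<Sum>i<n. degree n E i) - (\<Sum>i<n. ?A $$ (v,i))"
    by (simp add: sum_subtractf adj_sym[OF sg _ v])
  also have "(\<Sum>i<n. ?A $$ (v,i)) = real (degree n E v)" by (simp add: degree_sum_real[OF v])
  also have "?A $$ (v,v) = 0" using sg v unfolding simple_graph_def by (auto simp: adj_entry)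
  finally show ?thesis using handshake[OF sg] by simp
qed



lemma degK: 
  assumes "k < 2*p+1"
  shows "degree (2*p+1) (Kpp_K1 p) k = (if k < 2*p then p else 0)"
proof -
  consider "k < p" | "p \<le> k" "k < 2*p" | "k = 2*p" using assms by linarith
  thus ?thesis
  proof cases
    case 1
    hence "{j. j < 2*p+1 \<and> Kpp_K1 p k j} = {p..<2*p}" unfolding Kpp_K1_def by auto
    thus ?thesis using 1 unfolding degree_def by simp
  next
    case 2
    hence "{j. j < 2*p+1 \<and> Kpp_K1 p k j} = {0..<p}" unfolding Kpp_K1_def by auto
    thus ?thesis using 2 unfolding degree_def by simp
  next
    case 3
    hence "{j. j < 2*p+1 \<and> Kpp_K1 p k j} = {}" unfolding Kpp_K1_def by auto
    thus ?thesis using 3 unfolding degree_def by simp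
  qed
qed

lemma iso_props:
  assumes sg: "simple_graph n E" and iso: "graph_iso n E (2*p+1) (Kpp_K1 p)" and n: "n = 2*p+1"
  shows "min_degree n E = 0" "num_edges n E = p * p"
proof -
  let ?N = "2*p+1" and ?K = "Kpp_K1 p"
  from iso obtain f where bij: "bij_betw f {0..<n} {0..<?N}"
    and ed: "\<And>i j. i<n \<Longrightarrow> j<n \<Longrightarrow> E i j \<longleftrightarrow> ?K (f i) (f j)"
    unfolding graph_iso_def by blast
  have fr: "f i < ?N" if "i < n" for i using bij that unfolding bij_betw_def by auto
  have img: "f ` {0..<n} = {0..<?N}" using bij by (simp add: bij_betw_def)
  have surj: "\<exists>j<n. f j = j'" if "j' < ?N" for j'
  proof -
    have "j' \<in> f ` {0..<n}" using img that by simp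
    thus ?thesis by auto
  qed
  have degG: "degree n E i = degree ?N ?K (f i)" if i: "i < n" for i
  proof -
    have "f ` {j. j<n \<and> E i j} = {j'. j' < ?N \<and> ?K (f i) j'}"
    proof
      show "f ` {j. j<n \<and> E i j} \<subseteq> {j'. j' < ?N \<and> ?K (f i) j'}" using ed[OF i] fr by auto
      show "{j'. j' < ?N \<and> ?K (f i) j'} \<subseteq> f ` {j. j<n \<and> E i j}"
      proof
        fix j' assume j': "j' \<in> {j'. j' < ?N \<and> ?K (f i) j'}"
        then obtain j where "j < n" "f j = j'" using surj by auto
        thus "j' \<in> f ` {j. j<n \<and> E i j}" using ed[OF i] j' by auto
      qed
    qed
    moreover have "inj_on f {j. j<n \<and> E i j}"
      using bij unfolding bij_betw_def by (rule inj_on_subset[OF conjunct1]) auto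
    ultimately show ?thesis unfolding degree_def by (metis card_image)
  qed
  have "(\<Sum>i<n. degree n E i) = (\<Sum>i\<in>{0..<n}. degree ?N ?K (f i))"
    by (simp add: degG lessThan_atLeast0)
  also have "\<dots> = (\<Sum>k\<in>{0..<?N}. degree ?N ?K k)" by (rule sum.reindex_bij_betw[OF bij])
  also have "\<dots> = (\<Sum>k\<in>{0..<?N}. if k < 2*p then p else 0)"
  proof (intro sum.cong refl)
    fix k assume "k \<in> {0..<?N}"
    thus "degree ?N ?K k = (if k < 2*p then p else 0)" using degK[of k p] by simp
  qed
  also have "\<dots> = (\<Sum>k\<in>{0..<2*p}. p)"
  proof -
    have "(\<Sum>k\<in>{0..<Suc (2*p)}. if k < 2*p then p else 0) = (\<Sum>k\<in>{0..<2*p}. if k < 2*p then p else 0) + 0"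
      by (subst sum.atLeast0_lessThan_Suc) simp
    also have "(\<Sum>k\<in>{0..<2*p}. if k < 2*p then p else 0) = (\<Sum>k\<in>{0..<2*p}. p)" by (rule sum.cong) auto
    also have "(\<Sum>k\<in>{0..<2*p}. p) + 0 = (\<Sum>k\<in>{0..<2*p}. p)" by simp
    finally show ?thesis by simp
  qed
  also have "\<dots> = 2 * (p * p)" by simp
  finally show "num_edges n E = p * p" using handshake[OF sg] by simp
  obtain v where v: "v < n" "f v = 2*p"
    using surj[of "2*p"] by auto
  have "degree n E v = 0" using degG[OF v(1)] v(2) degK[of "2*p" p] by simp
  moreover have "min_degree n E \<le> degree n E v" using min_degree_ex(2)[OF _ v(1)] v by simp
  ultimately show "min_degree n E = 0" by simp
qed



lemma kpp_struct:
  assumes sg: "simple_graph n E" and bp: "bipartite n E" and n: "n = 2*p+1" and v: "v < n"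
    and dv: "degree n E v = 0" and dg: "\<And>i. i < n \<Longrightarrow> i \<noteq> v \<Longrightarrow> degree n E i = p" and p1: "p \<ge> 1"
  shows "graph_iso n E (2*p+1) (Kpp_K1 p)"
proof -
  from bp obtain X where X: "\<And>i j. E i j \<Longrightarrow> (i \<in> X \<longleftrightarrow> j \<notin> X)" unfolding bipartite_def by blast
  have Eb: "E i j \<Longrightarrow> i < n \<and> j < n \<and> i \<noteq> j" for i j using sg unfolding simple_graph_def by blast
  have Es: "E i j \<Longrightarrow> E j i" for i j using sg unfolding simple_graph_def by blast
  define X' where "X' = {i. i<n \<and> i \<noteq> v \<and> i \<in> X}"
  define Y' where "Y' = {i. i<n \<and> i \<noteq> v \<and> i \<notin> X}"
  have finX: "finite X'" and finY: "finite Y'" unfolding X'_def Y'_def by auto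
  have noV: "\<not> E v j" for j
  proof
    assume "E v j"
    hence "j \<in> {j. j < n \<and> E v j}" using Eb by auto
    moreover have "finite {j. j < n \<and> E v j}" by auto
    ultimately have "card {j. j < n \<and> E v j} > 0" by (auto simp: card_gt_0_iff)
    thus False using dv unfolding degree_def by simp
  qed
  have noV': "\<not> E j v" for j using noV Es by blast
  have NX: "{j. j<n \<and> E i j} = {j\<in>Y'. E i j}" if "i \<in> X'" for i
    using that X noV' Eb unfolding X'_def Y'_def by fastforce
  have NY: "{j. j<n \<and> E i j} = {j\<in>X'. E i j}" if "i \<in> Y'" for i
    using that X noV' Eb unfolding X'_def Y'_def by fastforce
  have dX: "p = (\<Sum>j\<in>Y'. if E i j then 1 else 0)" if "i \<in> X'" for i
  proof -
    have "p = degree n E i" using dg that unfolding X'_def by auto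
    also have "\<dots> = card {j\<in>Y'. E i j}" unfolding degree_def NX[OF that] ..
    finally show ?thesis using card_filter_sum[OF finY] by simp
  qed
  have dY: "p = (\<Sum>j\<in>X'. if E i j then 1 else 0)" if "i \<in> Y'" for i
  proof -
    have "p = degree n E i" using dg that unfolding Y'_def by auto
    also have "\<dots> = card {j\<in>X'. E i j}" unfolding degree_def NY[OF that] ..
    finally show ?thesis using card_filter_sum[OF finX] by simp
  qed
  have "p * card X' = (\<Sum>i\<in>X'. p)" by simp
  also have "\<dots> = (\<Sum>i\<in>X'. \<Sum>j\<in>Y'. if E i j then 1 else (0::nat))"
    by (rule sum.cong[OF refl], rule dX)
  also have "\<dots> = (\<Sum>j\<in>Y'. \<Sum>i\<in>X'. if E j i then 1 else (0::nat))"
  proof -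
    have Ei: "(if E i j then 1 else (0::nat)) = (if E j i then 1 else 0)" for i j using Es[of i j] Es[of j i] by auto
    show ?thesis by (subst sum.swap) (rule sum.cong[OF refl], rule sum.cong[OF refl], rule Ei)
  qed
  also have "\<dots> = (\<Sum>j\<in>Y'. p)" by (rule sum.cong[OF refl], rule dY[symmetric])
  also have "\<dots> = p * card Y'" by simp
  finally have cXY: "card X' = card Y'" using p1 by simp
  have "X' \<union> Y' = {0..<n} - {v}" "X' \<inter> Y' = {}" unfolding X'_def Y'_def by auto
  hence "card X' + card Y' = n - 1"
  proof -
    assume u: "X' \<union> Y' = {0..<n} - {v}" "X' \<inter> Y' = {}"
    have "card X' + card Y' = card (X' \<union> Y')" using card_Un_disjoint[OF finX finY u(2)] by simp
    also have "\<dots> = card ({0..<n} - {v})" using u(1) by simp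
    also have "\<dots> = n - 1" using v by (simp add: card_Diff_singleton)
    finally show ?thesis .
  qed
  hence cX: "card X' = p" and cY: "card Y' = p" using cXY n by auto
  have full: "E i j" if i: "i \<in> X'" and j: "j \<in> Y'" for i j
  proof -
    have "{j\<in>Y'. E i j} \<subseteq> Y'" by auto
    moreover have "card {j\<in>Y'. E i j} = card Y'"
      using dg[of i] i cY unfolding X'_def degree_def NX[OF i, symmetric] by auto
    ultimately have "{j\<in>Y'. E i j} = Y'" using finY by (metis card_subset_eq)
    thus ?thesis using j by auto
  qed
  have edge: "E i j \<longleftrightarrow> (i \<in> X' \<and> j \<in> Y') \<or> (i \<in> Y' \<and> j \<in> X')" if "i < n" "j < n" for i j
  proof
    assume "E i j" thus "(i \<in> X' \<and> j \<in> Y') \<or> (i \<in> Y' \<and> j \<in> X')"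
      using X[of i j] Eb[of i j] noV noV' unfolding X'_def Y'_def by blast
  next
    assume "(i \<in> X' \<and> j \<in> Y') \<or> (i \<in> Y' \<and> j \<in> X')"
    thus "E i j" using full Es by blast
  qed
  obtain gX where gX: "bij_betw gX X' {0..<p}" using finite_same_card_bij[OF finX, of "{0..<p}"] cX by auto
  obtain gY where gY: "bij_betw gY Y' {p..<2*p}" using finite_same_card_bij[OF finY, of "{p..<2*p}"] cY by auto
  define f where "f i = (if i \<in> X' then gX i else if i \<in> Y' then gY i else 2*p)" for i
  have fX: "bij_betw f X' {0..<p}" using gX by (rule bij_betw_cong[THEN iffD1, rotated]) (auto simp: f_def)
  have fY: "bij_betw f Y' {p..<2*p}"
    using gY by (rule bij_betw_cong[THEN iffD1, rotated]) (auto simp: f_def X'_def Y'_def)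
  have fv: "bij_betw f {v} {2*p}" unfolding f_def X'_def Y'_def by (simp add: bij_betw_def)
  have "bij_betw f (X' \<union> Y') ({0..<p} \<union> {p..<2*p})" by (rule bij_betw_combine[OF fX fY]) auto
  hence "bij_betw f ((X' \<union> Y') \<union> {v}) (({0..<p} \<union> {p..<2*p}) \<union> {2*p})" by (rule bij_betw_combine[OF _ fv]) auto
  moreover have "(X' \<union> Y') \<union> {v} = {0..<n}" using v unfolding X'_def Y'_def by auto
  moreover have "({0..<p} \<union> {p..<2*p}) \<union> {2*p} = {0..<2*p+1}" by auto
  ultimately have bij: "bij_betw f {0..<n} {0..<2*p+1}" by simp
  have fXr: "i \<in> X' \<Longrightarrow> f i < p" for i using fX unfolding bij_betw_def by auto
  have fYr: "i \<in> Y' \<Longrightarrow> p \<le> f i \<and> f i < 2*p" for i using fY unfolding bij_betw_def by auto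
  have fvr: "i < n \<Longrightarrow> i \<notin> X' \<Longrightarrow> i \<notin> Y' \<Longrightarrow> f i = 2*p" for i unfolding f_def by auto
  have cls: "i < n \<Longrightarrow> (f i < p \<longleftrightarrow> i \<in> X') \<and> (p \<le> f i \<and> f i < 2*p \<longleftrightarrow> i \<in> Y')" for i
  proof -
    assume i: "i < n"
    have dj: "i \<in> X' \<Longrightarrow> i \<notin> Y'" unfolding X'_def Y'_def by auto
    show ?thesis
    proof (cases "i \<in> X'")
      case True thus ?thesis using fXr[OF True] dj by auto
    next
      case False
      show ?thesis
      proof (cases "i \<in> Y'")
        case True thus ?thesis using fYr[OF True] False by auto
      next
        case F2: False thus ?thesis using fvr[OF i False F2] p1 False by auto
      qed
    qed
  qed
  show ?thesis unfolding graph_iso_def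
  proof (intro exI conjI allI impI)
    show "bij_betw f {0..<n} {0..<2*p+1}" by (rule bij)
    fix i j assume i: "i < n" and j: "j < n"
    show "E i j \<longleftrightarrow> Kpp_K1 p (f i) (f j)"
      unfolding edge[OF i j] Kpp_K1_def using cls[OF i] cls[OF j] by blast
  qed
qed



lemma deg0_noedge:
  assumes sg: "simple_graph n E" and dv: "degree n E v = 0"
  shows "\<not> E v j"
proof
  assume e: "E v j"
  hence "j \<in> {j. j < n \<and> E v j}" using sg unfolding simple_graph_def by auto
  moreover have "finite {j. j < n \<and> E v j}" by auto
  ultimately have "card {j. j < n \<and> E v j} > 0" by (auto simp: card_gt_0_iff)
  thus False using dv unfolding degree_def by simp
qed

lemma list_sq_zero:
  fixes ys :: "real list"
  assumes "(\<Sum>y\<leftarrow>ys. y^2) = 0" shows "\<forall>y\<in>set ys. y = 0"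
proof -
  have "\<forall>x\<in>set (map (\<lambda>y. y^2) ys). x = 0"
    using assms by (subst sum_list_nonneg_eq_0_iff[symmetric]) auto
  thus ?thesis by auto
qed

lemma cosh_abs_real: "cosh \<bar>x::real\<bar> = cosh x"
  by (cases "x \<ge> 0") (auto simp: cosh_minus)

theorem mainTheorem12:
  fixes n :: nat and E :: "nat \<Rightarrow> nat \<Rightarrow> bool"
  assumes "simple_graph n E" and "bipartite n E"
    and "n \<ge> 2" and "num_edges n E \<ge> 1"
  shows "estrada_index n E \<ge>
           2 * cosh (2 * (real (num_edges n E) - real (min_degree n E)) / (real n - 1))
           + (real n - 2) \<and>
         (estrada_index n E =
           2 * cosh (2 * (real (num_edges n E) - real (min_degree n E)) / (real n - 1))
           + (real n - 2)
         \<longleftrightarrow> (\<exists>p. n = 2 * p + 1 \<and> graph_iso n E (2 * p + 1) (Kpp_K1 p)))"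
proof -
  note sg = assms(1) and bp = assms(2) and n2 = assms(3) and m1 = assms(4)
  define A where "A = adj_matrix n E"
  define m where "m = num_edges n E"
  define \<delta> where "\<delta> = min_degree n E"
  define t where "t = 2 * (real m - real \<delta>) / (real n - 1)"
  have Ac: "A \<in> carrier_mat n n" unfolding A_def by (rule adj_carrier)
  have symA: "\<And>i j. i<n \<Longrightarrow> j<n \<Longrightarrow> A$$(i,j) = A$$(j,i)" unfolding A_def by (rule adj_sym[OF sg])
  obtain rs where cp: "char_poly A = (\<Prod>r\<leftarrow>rs. [:-r,1:])" and len: "length rs = n"
    using real_sym_char_poly_split[OF Ac symA] by blast
  have symsp: "mset (map uminus rs) = mset rs" using bip_sym_spec[OF sg bp cp[unfolded A_def]] .
  have EE: "estrada_index n E = (\<Sum>r\<leftarrow>rs. cosh r)"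
    using estrada_list[OF cp[unfolded A_def]] sym_sum_cosh[OF symsp] by simp
  have sq: "(\<Sum>r\<leftarrow>rs. r^2) = 2 * real m"
    using mtr_pow_eigs[OF Ac cp, of 2] tr_sq[OF sg] unfolding A_def m_def by simp
  have rsne: "set rs \<noteq> {}" using len n2 by auto
  define \<rho> where "\<rho> = Max (abs ` set rs)"
  have \<rho>in: "\<rho> \<in> abs ` set rs" unfolding \<rho>_def using rsne by (intro Max_in) auto
  then obtain l where l: "l \<in> set rs" "\<bar>l\<bar> = \<rho>" by auto
  have \<rho>ge: "\<And>r. r \<in> set rs \<Longrightarrow> \<bar>r\<bar> \<le> \<rho>" unfolding \<rho>_def by (intro Max_ge) auto
  have \<rho>0: "\<rho> \<ge> 0" using l by auto
  obtain v where v: "v < n" "degree n E v = \<delta>" and vmin: "\<And>i. i < n \<Longrightarrow> \<delta> \<le> degree n E i"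
    using min_degree_ex[where n=n and E=E] n2 unfolding \<delta>_def by auto
  define x where "x = ind v"
  define w where "w = (\<Sum>i<n. (x i)^2)"
  have w: "w = real n - 1" unfolding w_def x_def by (rule w_ind[OF v(1)])
  have wpos: "w > 0" using w n2 by simp
  have q1: "qf A n x 1 = t * w"
    unfolding A_def x_def qf_ind[OF sg v(1)] t_def w m_def v(2) using n2 by (simp add: field_simps)
  have "\<bar>qf A n x 1\<bar> \<le> w * \<rho>^1"
    unfolding w_def by (rule rayleigh_gen[OF Ac symA cp len \<rho>0 \<rho>ge]) auto
  hence "\<bar>t\<bar> * w \<le> \<rho> * w" unfolding q1 using wpos by (simp add: abs_mult mult.commute)
  hence t\<rho>: "\<bar>t\<bar> \<le> \<rho>" using wpos by simp
  have l0: "l \<noteq> 0"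
  proof
    assume "l = 0"
    hence "\<rho> = 0" using l by simp
    hence "\<forall>r\<in>set rs. r = 0" using \<rho>ge by fastforce
    hence "(\<Sum>r\<leftarrow>rs. r^2) = 0" by (induction rs) auto
    thus False using sq m1 unfolding m_def by simp
  qed
  obtain ys where ys: "mset rs = add_mset l (add_mset (-l) (mset ys))" using split_pair[OF symsp l(1) l0] by blast
  have EE2: "estrada_index n E = 2 * cosh \<rho> + (\<Sum>y\<leftarrow>ys. cosh y)"
    unfolding EE split_sum(1)[OF ys] using l(2) cosh_abs_real[of l] by (simp add: cosh_minus)
  have lys: "real n - 2 = real (length ys)" using split_sum(2)[OF ys] len by simp
  have sq2: "2 * \<rho>^2 + (\<Sum>y\<leftarrow>ys. y^2) = 2 * real m"
  proof -
    have "l^2 = \<rho>^2" using l(2) by (metis power2_abs)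
    thus ?thesis using sq unfolding split_sum(1)[OF ys] by simp
  qed
  have ys1: "(\<Sum>y\<leftarrow>ys. cosh y) \<ge> real (length ys)"
  proof -
    have "(\<Sum>y\<leftarrow>ys. (1::real)) \<le> (\<Sum>y\<leftarrow>ys. cosh y)" by (rule sum_list_mono) (simp add: cosh_real_ge_1)
    thus ?thesis by (simp add: sum_list_triv)
  qed
  have ct: "cosh t \<le> cosh \<rho>"
    using t\<rho> cosh_real_nonneg_le_iff[of "\<bar>t\<bar>" \<rho>] \<rho>0 cosh_abs_real[of t] by simp
  have ineq: "estrada_index n E \<ge> 2 * cosh t + (real n - 2)"
    unfolding EE2 lys using ct ys1 by simp
  have ysq0: "(\<Sum>y\<leftarrow>ys. y^2) \<ge> 0" by (induction ys) auto
  have eq: "estrada_index n E = 2 * cosh t + (real n - 2) \<longleftrightarrow> (\<exists>p. n = 2 * p + 1 \<and> graph_iso n E (2 * p + 1) (Kpp_K1 p))"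
  proof
    assume eqE: "estrada_index n E = 2 * cosh t + (real n - 2)"
    hence e1: "cosh \<rho> = cosh t" and e2: "(\<Sum>y\<leftarrow>ys. cosh y) = real (length ys)"
      using ct ys1 unfolding EE2 lys by linarith+
    have "\<rho> \<le> \<bar>t\<bar>" using e1 cosh_real_nonneg_le_iff[of \<rho> "\<bar>t\<bar>"] \<rho>0 cosh_abs_real[of t] by simp
    hence \<rho>t: "\<rho> = \<bar>t\<bar>" using t\<rho> by simp
    have "(\<Sum>y\<leftarrow>ys. cosh y - 1) = 0" using e2 by (simp add: sum_list_subtractf sum_list_triv)
    hence "\<forall>c\<in>set (map (\<lambda>y. cosh y - 1) ys). c = 0"
      by (subst sum_list_nonneg_eq_0_iff[symmetric]) (auto simp: cosh_real_ge_1)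
    hence ysz: "\<forall>y\<in>set ys. y = 0" by (auto simp: cosh_real_one_iff)
    hence "(\<Sum>y\<leftarrow>ys. y^2) = 0" by (induction ys) auto
    hence mt: "real m = t^2" using sq2 \<rho>t by simp
    have all\<rho>: "\<And>r. r \<in> set rs \<Longrightarrow> \<bar>r\<bar> \<le> \<bar>t\<bar>" using \<rho>ge \<rho>t by simp
    have "\<bar>qf A n x 2\<bar> \<le> w * \<bar>t\<bar>^2"
      unfolding w_def by (rule rayleigh_gen[OF Ac symA cp len _ all\<rho>]) auto
    hence "\<bar>qf A n x 2\<bar> \<le> w * t^2" by simp
    hence q2': "qf A n x 2 \<le> w * t^2" by (rule order_trans[OF abs_ge_self])
    have q2: "qf A n x (1+1) \<le> w * t^2" using q2' by (simp only: one_add_one)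
    define y where "y i = yv A n x 1 i" for i
    have q2y: "qf A n x (1+1) = (\<Sum>i<n. (y i)^2)" unfolding y_def by (rule qf_double[OF Ac symA])
    have q1y: "qf A n x 1 = (\<Sum>i<n. x i * y i)" unfolding y_def by (rule qf_yv[OF Ac symA])
    have "(\<Sum>i<n. (y i - t * x i)^2) = (\<Sum>i<n. (y i)^2 - 2 * t * (x i * y i) + t^2 * (x i)^2)"
      by (intro sum.cong refl) (simp add: power2_eq_square algebra_simps)
    also have "\<dots> = (\<Sum>i<n. (y i)^2) - 2 * t * (\<Sum>i<n. x i * y i) + t^2 * w"
      unfolding w_def by (simp add: sum.distrib sum_subtractf sum_distrib_left)
    also have "\<dots> \<le> 0" using q2 q1 q2y q1y by (simp add: power2_eq_square algebra_simps)
    finally have le0: "(\<Sum>i<n. (y i - t * x i)^2) \<le> 0" .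
    have "0 \<le> (\<Sum>i<n. (y i - t * x i)^2)" by (intro sum_nonneg) auto
    hence "(\<Sum>i<n. (y i - t * x i)^2) = 0" using le0 by linarith
    hence yeq: "\<And>i. i < n \<Longrightarrow> y i = t * x i" by (subst (asm) sum_nonneg_eq_0_iff) auto
    have Avv: "A $$ (v,v) = 0" using sg v(1) unfolding A_def simple_graph_def by (auto simp: adj_entry)
    have "real \<delta> = 0" using yeq[OF v(1)] yv_ind[OF v(1) v(1), of E] v(2) Avv unfolding y_def x_def A_def
      by (simp add: ind_def)
    hence d0: "\<delta> = 0" by simp
    have noV: "\<not> E v j" for j using deg0_noedge[OF sg] v(2) d0 by simp
    have degi: "real (degree n E i) = t" if "i < n" "i \<noteq> v" for i
    proof -
      have "A $$ (i,v) = 0" using noV[of i] symA[OF that(1) v(1)] v(1) that(1) unfolding A_def by (simp add: adj_entry)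
      thus ?thesis using yeq[OF that(1)] yv_ind[OF v(1) that(1), of E] that(2) unfolding y_def x_def A_def
        by (simp add: ind_def)
    qed
    have tpos: "t \<noteq> 0" using mt m1 unfolding m_def by auto
    have "t * (real n - 1) = 2 * real m" unfolding t_def d0 using n2 by simp
    hence "t * (real n - 1) = 2 * t * t" using mt by (simp add: power2_eq_square)
    hence n1t: "real n - 1 = 2 * t" using tpos by simp
    define i0 :: nat where "i0 = (if v = 0 then 1 else 0)"
    have i0: "i0 < n" "i0 \<noteq> v" unfolding i0_def using n2 by auto
    define p where "p = degree n E i0"
    have pt: "real p = t" unfolding p_def by (rule degi[OF i0])
    have np: "n = 2 * p + 1" using n1t pt n2 by linarith
    have p1: "p \<ge> 1" using pt tpos by (cases p) auto
    have dgp: "\<And>i. i < n \<Longrightarrow> i \<noteq> v \<Longrightarrow> degree n E i = p" using degi pt by (metis of_nat_eq_iff)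
    have "graph_iso n E (2*p+1) (Kpp_K1 p)"
      by (rule kpp_struct[OF sg bp np v(1) _ dgp p1]) (use v(2) d0 in simp)
    thus "\<exists>p. n = 2 * p + 1 \<and> graph_iso n E (2 * p + 1) (Kpp_K1 p)" using np by blast
  next
    assume "\<exists>p. n = 2 * p + 1 \<and> graph_iso n E (2 * p + 1) (Kpp_K1 p)"
    then obtain p where np: "n = 2 * p + 1" and iso: "graph_iso n E (2 * p + 1) (Kpp_K1 p)" by blast
    have d0: "\<delta> = 0" and mp: "m = p * p" using iso_props[OF sg iso np] unfolding \<delta>_def m_def by auto
    have p1: "p \<ge> 1" using np n2 by simp
    have tp: "t = real p" unfolding t_def d0 mp np using p1 by (simp add: field_simps)
    have "\<rho>^2 \<ge> (real p)^2" using t\<rho> tp by (intro power_mono) auto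
    hence "(\<Sum>y\<leftarrow>ys. y^2) \<le> 0" and "\<rho>^2 \<le> (real p)^2" using sq2 ysq0 mp by (simp_all add: power2_eq_square)
    hence ys0: "(\<Sum>y\<leftarrow>ys. y^2) = 0" and "\<rho>^2 = (real p)^2"
      using ysq0 \<open>\<rho>^2 \<ge> (real p)^2\<close> by linarith+
    hence "\<rho> = real p" using \<rho>0 by (simp add: power2_eq_iff_nonneg)
    have "\<forall>y\<in>set ys. y = 0" by (rule list_sq_zero[OF ys0])
    hence "(\<Sum>y\<leftarrow>ys. cosh y) = real (length ys)" by (induction ys) auto
    thus "estrada_index n E = 2 * cosh t + (real n - 2)"
      unfolding EE2 lys using \<open>\<rho> = real p\<close> tp by simp
  qed
  show ?thesis using ineq eq unfolding t_def m_def \<delta>_def by blast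
qed


end
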